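(* Let $X$ be a non-empty finite set and $\mathcal{P}=\{P_1,\ldots,P_n\}$ a partition of $X$ with $n\ge 2$ blocks, indexed so that $|P_i|\le|P_j|$ whenever $i<j$. Let $U\subseteq T(X,\mathcal{P})\setminus\Sigma(X,\mathcal{P})$ be such that $T(X,\mathcal{P})$ is generated (as a semigroup) by $\Sigma(X,\mathcal{P})\cup U$. Then for all distinct $i,j\in\{1,\ldots,n\}$ there exist $f\in U\cap\mathcal{A}$ and distinct $k,l\in\{1,\ldots,n\}$ such that $(k)\overline{f}=(l)\overline{f}$, $|P_i|=|P_k|$ and $|P_j|=|P_l|$.
   Context: Maps are written on the right and composed left to right. $T(X,\mathcal{P})$ is the semigroup of maps $f:X\to X$ such that each block of $\mathcal{P}$ is mapped into some block of $\mathcal{P}$; $\Sigma(X,\mathcal{P})$ is the set of $f\in T(X,\mathcal{P})$ whose image intersects every block of $\mathcal{P}$. For $f\in T(X,\mathcal{P})$, $\overline{f}:\{1,\ldots,n\}\to\{1,\ldots,n\}$ is defined by $(i)\overline{f}=j$ whenever $P_if\subseteq P_j$. $\mathcal{A}$ is the set of $f\in T(X,\mathcal{P})$ such that $f|_{P_i}$ is injective for every $i$ and $|\operatorname{im}(\overline{f})|=n-1$. *)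

theory Defs
  imports Main "HOL-Library.FuncSet"
begin

text \<open>Maps X -> X are represented as extensional functions (value undefined outside X). Maps act on the right, so the
product f g (first f, then g) is the function compose X g f.\<close>

definition is_partition :: "'a set \<Rightarrow> (nat \<Rightarrow> 'a set) \<Rightarrow> nat \<Rightarrow> bool" where
  "is_partition X P n \<longleftrightarrow>
     (\<forall>i\<in>{1..n}. P i \<noteq> {}) \<and>
     (\<forall>i\<in>{1..n}. \<forall>j\<in>{1..n}. i \<noteq> j \<longrightarrow> P i \<inter> P j = {}) \<and>
     (\<Union>i\<in>{1..n}. P i) = X"

definition TP :: "'a set \<Rightarrow> (nat \<Rightarrow> 'a set) \<Rightarrow> nat \<Rightarrow> ('a \<Rightarrow> 'a) set" where
  "TP X P n = {f \<in> X \<rightarrow>\<^sub>E X. \<forall>i\<in>{1..n}. \<exists>j\<in>{1..n}. f ` P i \<subseteq> P j}"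

definition SigmaP :: "'a set \<Rightarrow> (nat \<Rightarrow> 'a set) \<Rightarrow> nat \<Rightarrow> ('a \<Rightarrow> 'a) set" where
  "SigmaP X P n = {f \<in> TP X P n. \<forall>j\<in>{1..n}. f ` X \<inter> P j \<noteq> {}}"

definition fbar :: "(nat \<Rightarrow> 'a set) \<Rightarrow> nat \<Rightarrow> ('a \<Rightarrow> 'a) \<Rightarrow> nat \<Rightarrow> nat" where
  "fbar P n f i = (THE j. j \<in> {1..n} \<and> f ` P i \<subseteq> P j)"

definition AP :: "'a set \<Rightarrow> (nat \<Rightarrow> 'a set) \<Rightarrow> nat \<Rightarrow> ('a \<Rightarrow> 'a) set" where
  "AP X P n = {f \<in> TP X P n. (\<forall>i\<in>{1..n}. inj_on f (P i)) \<and>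
                 card (fbar P n f ` {1..n}) = n - 1}"

inductive_set sgen :: "'a set \<Rightarrow> ('a \<Rightarrow> 'a) set \<Rightarrow> ('a \<Rightarrow> 'a) set"
  for X :: "'a set" and S :: "('a \<Rightarrow> 'a) set" where
  base: "f \<in> S \<Longrightarrow> f \<in> sgen X S"
| mult: "f \<in> sgen X S \<Longrightarrow> g \<in> sgen X S \<Longrightarrow> compose X g f \<in> sgen X S"

end

theory Submission
  imports Defs
begin

locale part =
  fixes X :: "'a set" and P :: "nat \<Rightarrow> 'a set" and n :: nat
  assumes ip: "is_partition X P n"
begin

lemma ne: "i \<in> {1..n} \<Longrightarrow> P i \<noteq> {}"
  using ip unfolding is_partition_def by blast

lemma sub: "i \<in> {1..n} \<Longrightarrow> P i \<subseteq> X"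
  using ip unfolding is_partition_def by blast

lemma uniq: "a \<in> {1..n} \<Longrightarrow> b \<in> {1..n} \<Longrightarrow> z \<in> P a \<Longrightarrow> z \<in> P b \<Longrightarrow> a = b"
  using ip unfolding is_partition_def by blast

lemma cover: "x \<in> X \<Longrightarrow> \<exists>k\<in>{1..n}. x \<in> P k"
  using ip unfolding is_partition_def by blast

lemma fbar_eq:
  assumes "i \<in> {1..n}" "j \<in> {1..n}" "f ` P i \<subseteq> P j"
  shows "fbar P n f i = j"
  unfolding fbar_def
proof (rule the_equality)
  show "j \<in> {1..n} \<and> f ` P i \<subseteq> P j" using assms by blast
next
  fix j' assume h: "j' \<in> {1..n} \<and> f ` P i \<subseteq> P j'"
  obtain z where "z \<in> P i" using ne[OF assms(1)] by blast
  then show "j' = j" using h assms uniq by blast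
qed

lemma fbar:
  assumes "f \<in> TP X P n" "i \<in> {1..n}"
  shows "fbar P n f i \<in> {1..n} \<and> f ` P i \<subseteq> P (fbar P n f i)"
proof -
  obtain j where "j \<in> {1..n}" "f ` P i \<subseteq> P j" using assms unfolding TP_def by blast
  then show ?thesis using fbar_eq[OF assms(2)] by simp
qed

lemma TP_comp:
  assumes "f \<in> TP X P n" "g \<in> TP X P n"
  shows "compose X g f \<in> TP X P n"
proof -
  have "compose X g f \<in> X \<rightarrow>\<^sub>E X"
    using assms unfolding TP_def
    by (auto simp: compose_def PiE_def Pi_def extensional_def)
  moreover have "\<forall>i\<in>{1..n}. \<exists>k\<in>{1..n}. compose X g f ` P i \<subseteq> P k"
  proof
    fix i assume i: "i \<in> {1..n}"
    obtain j where j: "j \<in> {1..n}" "f ` P i \<subseteq> P j" using assms i unfolding TP_def by blast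
    obtain k where k: "k \<in> {1..n}" "g ` P j \<subseteq> P k" using assms j unfolding TP_def by blast
    have "compose X g f ` P i \<subseteq> P k"
      using sub[OF i] j k by (auto simp: compose_def)
    then show "\<exists>k\<in>{1..n}. compose X g f ` P i \<subseteq> P k" using k by blast
  qed
  ultimately show ?thesis unfolding TP_def by blast
qed

lemma Sig_comp:
  assumes "f \<in> SigmaP X P n" "g \<in> SigmaP X P n"
  shows "compose X g f \<in> SigmaP X P n"
proof -
  have fT: "f \<in> TP X P n" and gT: "g \<in> TP X P n" using assms unfolding SigmaP_def by auto
  have "\<forall>j\<in>{1..n}. compose X g f ` X \<inter> P j \<noteq> {}"
  proof
    fix j assume j: "j \<in> {1..n}"
    obtain y where y: "y \<in> X" "g y \<in> P j" using assms(2) j unfolding SigmaP_def by blast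
    obtain k where k: "k \<in> {1..n}" "y \<in> P k" using cover[OF y(1)] by blast
    obtain x where x: "x \<in> X" "f x \<in> P k" using assms(1) k unfolding SigmaP_def by blast
    have "g ` P k \<subseteq> P (fbar P n g k)" "fbar P n g k \<in> {1..n}" using fbar[OF gT k(1)] by auto
    then have "fbar P n g k = j" using y k j uniq by blast
    then have "g (f x) \<in> P j" using fbar[OF gT k(1)] x by auto
    then show "compose X g f ` X \<inter> P j \<noteq> {}" using x by (auto simp: compose_def)
  qed
  then show ?thesis using TP_comp[OF fT gT] unfolding SigmaP_def by blast
qed

lemma id_Sig: "restrict id X \<in> SigmaP X P n"
proof -
  have "restrict id X \<in> TP X P n"
    unfolding TP_def using sub by force
  moreover have "\<forall>j\<in>{1..n}. restrict id X ` X \<inter> P j \<noteq> {}"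
    using sub ne by force
  ultimately show ?thesis unfolding SigmaP_def by blast
qed

lemma inv:
  assumes "h \<in> sgen X (SigmaP X P n \<union> U)" "sgen X (SigmaP X P n \<union> U) \<subseteq> TP X P n"
    "U \<subseteq> TP X P n"
  shows "h \<in> SigmaP X P n \<or> (\<exists>u\<in>U. \<exists>s\<in>SigmaP X P n. \<exists>r\<in>TP X P n. \<forall>x\<in>X. h x = r (u (s x)))"
  using assms(1)
proof (induction rule: sgen.induct)
  case (base f)
  show ?case
  proof (cases "f \<in> SigmaP X P n")
    case False
    then have "f \<in> U" using base by blast
    moreover have "\<forall>x\<in>X. f x = restrict id X (f (restrict id X x))"
      using assms(3) \<open>f \<in> U\<close> unfolding TP_def by (auto simp: PiE_def Pi_def)
    moreover have "restrict id X \<in> TP X P n" using id_Sig unfolding SigmaP_def by blast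
    ultimately show ?thesis using id_Sig by blast
  qed simp
next
  case (mult f g)
  have fT: "f \<in> TP X P n" and gT: "g \<in> TP X P n" using mult assms(2) by auto
  have fX: "\<And>x. x \<in> X \<Longrightarrow> f x \<in> X" using fT unfolding TP_def by auto
  from mult.IH(1) show ?case
  proof
    assume fS: "f \<in> SigmaP X P n"
    from mult.IH(2) show ?case
    proof
      assume "g \<in> SigmaP X P n"
      then show ?case using Sig_comp fS by blast
    next
      assume "\<exists>u\<in>U. \<exists>s\<in>SigmaP X P n. \<exists>r\<in>TP X P n. \<forall>x\<in>X. g x = r (u (s x))"
      then obtain u s r where usr: "u \<in> U" "s \<in> SigmaP X P n" "r \<in> TP X P n"
        "\<forall>x\<in>X. g x = r (u (s x))" by blast
      have "compose X s f \<in> SigmaP X P n" using Sig_comp fS usr(2) by blast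
      moreover have "\<forall>x\<in>X. compose X g f x = r (u (compose X s f x))"
        using usr(4) fX by (simp add: compose_def)
      ultimately show ?case using usr by blast
    qed
  next
    assume "\<exists>u\<in>U. \<exists>s\<in>SigmaP X P n. \<exists>r\<in>TP X P n. \<forall>x\<in>X. f x = r (u (s x))"
    then obtain u s r where usr: "u \<in> U" "s \<in> SigmaP X P n" "r \<in> TP X P n"
      "\<forall>x\<in>X. f x = r (u (s x))" by blast
    have sX: "\<And>x. x \<in> X \<Longrightarrow> s x \<in> X" using usr(2) unfolding SigmaP_def TP_def by auto
    have uX: "\<And>x. x \<in> X \<Longrightarrow> u x \<in> X" using usr(1) assms(3) unfolding TP_def by auto
    have "compose X g r \<in> TP X P n" using TP_comp usr(3) gT by blast
    moreover have "\<forall>x\<in>X. compose X g f x = compose X g r (u (s x))"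
      using usr(4) sX uX by (simp add: compose_def)
    ultimately show ?case using usr by blast
  qed
qed

end

theorem lemma3p2:
  fixes X :: "'a set" and P :: "nat \<Rightarrow> 'a set" and n :: nat and U :: "('a \<Rightarrow> 'a) set"
  assumes "finite X" and "X \<noteq> {}"
    and "is_partition X P n" and "n \<ge> 2"
    and "\<forall>i\<in>{1..n}. \<forall>j\<in>{1..n}. i < j \<longrightarrow> card (P i) \<le> card (P j)"
    and "U \<subseteq> TP X P n - SigmaP X P n"
    and "sgen X (SigmaP X P n \<union> U) = TP X P n"
  shows "\<forall>i\<in>{1..n}. \<forall>j\<in>{1..n}. i \<noteq> j \<longrightarrow>
           (\<exists>f\<in>U \<inter> AP X P n. \<exists>k\<in>{1..n}. \<exists>l\<in>{1..n}. k \<noteq> l \<and>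
              fbar P n f k = fbar P n f l \<and> card (P i) = card (P k) \<and> card (P j) = card (P l))"
proof (intro ballI impI)
  interpret part X P n using assms(3) by unfold_locales
  fix i j assume i: "i \<in> {1..n}" and j: "j \<in> {1..n}" and ij: "i \<noteq> j"
  obtain a b where ab: "a \<in> {1..n}" "b \<in> {1..n}" "a \<noteq> b" "card (P a) \<le> card (P b)"
    "{a, b} = {i, j}"
  proof (cases "card (P i) \<le> card (P j)")
    case True then show ?thesis using that i j ij by blast
  next
    case False then show ?thesis using that[of j i] i j ij by auto
  qed
  have fin: "\<And>m. m \<in> {1..n} \<Longrightarrow> finite (P m)" using sub assms(1) finite_subset by blast
  obtain e where e: "e \<in> P a \<rightarrow> P b" "inj_on e (P a)"
    using card_le_inj[OF fin[OF ab(1)] fin[OF ab(2)] ab(4)] by blast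
  define g where "g = (\<lambda>x. if x \<in> P a then e x else if x \<in> X then x else undefined)"
  define \<phi> where "\<phi> = (\<lambda>m::nat. if m = a then b else m)"
  have gP: "\<And>m. m \<in> {1..n} \<Longrightarrow> g ` P m \<subseteq> P (\<phi> m) \<and> g ` P m \<noteq> {} \<and> \<phi> m \<in> {1..n}"
  proof -
    fix m assume m: "m \<in> {1..n}"
    show "g ` P m \<subseteq> P (\<phi> m) \<and> g ` P m \<noteq> {} \<and> \<phi> m \<in> {1..n}"
    proof (cases "m = a")
      case True then show ?thesis using e ne[OF m] ab unfolding g_def \<phi>_def by auto
    next
      case False
      have "\<And>x. x \<in> P m \<Longrightarrow> x \<notin> P a" using uniq m ab(1) False by blast
      then show ?thesis using False ne[OF m] sub[OF m] m unfolding g_def \<phi>_def by auto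
    qed
  qed
  have gTP: "g \<in> TP X P n"
  proof -
    have "g \<in> X \<rightarrow>\<^sub>E X" using e sub ab unfolding g_def by (auto simp: PiE_def Pi_def extensional_def)
    then show ?thesis unfolding TP_def using gP by blast
  qed
  have ginj: "\<And>m. m \<in> {1..n} \<Longrightarrow> inj_on g (P m)"
  proof -
    fix m assume m: "m \<in> {1..n}"
    show "inj_on g (P m)"
    proof (cases "m = a")
      case True then show ?thesis using e(2) unfolding g_def inj_on_def by auto
    next
      case False
      have "\<And>x. x \<in> P m \<Longrightarrow> x \<notin> P a" using uniq m ab(1) False by blast
      then show ?thesis using sub[OF m] unfolding g_def inj_on_def by auto
    qed
  qed
  have gsep: "\<And>m m' c. m \<in> {1..n} \<Longrightarrow> m' \<in> {1..n} \<Longrightarrow> c \<in> {1..n} \<Longrightarrow> m \<noteq> m' \<Longrightarrow>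
      g ` P m \<subseteq> P c \<Longrightarrow> g ` P m' \<subseteq> P c \<Longrightarrow> {m, m'} = {a, b}"
  proof -
    fix m m' c assume h: "m \<in> {1..n}" "m' \<in> {1..n}" "c \<in> {1..n}" "m \<noteq> m'"
      "g ` P m \<subseteq> P c" "g ` P m' \<subseteq> P c"
    have "\<phi> m = c"
    proof -
      obtain z where "z \<in> g ` P m" using gP[OF h(1)] by blast
      then show ?thesis using gP[OF h(1)] h uniq by blast
    qed
    moreover have "\<phi> m' = c"
    proof -
      obtain z where "z \<in> g ` P m'" using gP[OF h(2)] by blast
      then show ?thesis using gP[OF h(2)] h uniq by blast
    qed
    ultimately show "{m, m'} = {a, b}" using h(4) unfolding \<phi>_def by (auto split: if_splits)
  qed
  have gnS: "g \<notin> SigmaP X P n"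
  proof
    assume "g \<in> SigmaP X P n"
    then obtain x where x: "x \<in> X" "g x \<in> P a" using ab(1) unfolding SigmaP_def by blast
    obtain m where m: "m \<in> {1..n}" "x \<in> P m" using cover[OF x(1)] by blast
    have "g x \<in> P (\<phi> m)" using gP[OF m(1)] m by blast
    then have "\<phi> m = a" using uniq gP[OF m(1)] x ab by blast
    then show False using ab(3) unfolding \<phi>_def by (auto split: if_splits)
  qed
  have UT: "U \<subseteq> TP X P n" using assms(6) by blast
  from inv[of g U] assms(7) gTP UT gnS
  obtain u s r where usr: "u \<in> U" "s \<in> SigmaP X P n" "r \<in> TP X P n"
      "\<forall>x\<in>X. g x = r (u (s x))" by auto
  have sT: "s \<in> TP X P n" using usr(2) unfolding SigmaP_def by blast
  have uT: "u \<in> TP X P n" using usr(1) UT by blast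
  define \<sigma> where "\<sigma> = fbar P n s"
  have \<sigma>: "\<And>k. k \<in> {1..n} \<Longrightarrow> \<sigma> k \<in> {1..n} \<and> s ` P k \<subseteq> P (\<sigma> k)"
    using fbar[OF sT] unfolding \<sigma>_def by blast
  have \<sigma>surj: "\<sigma> ` {1..n} = {1..n}"
  proof
    show "\<sigma> ` {1..n} \<subseteq> {1..n}" using \<sigma> by blast
    show "{1..n} \<subseteq> \<sigma> ` {1..n}"
    proof
      fix j' assume j': "j' \<in> {1..n}"
      then obtain x where x: "x \<in> X" "s x \<in> P j'" using usr(2) unfolding SigmaP_def by blast
      obtain k where k: "k \<in> {1..n}" "x \<in> P k" using cover[OF x(1)] by blast
      have "s x \<in> P (\<sigma> k)" using \<sigma>[OF k(1)] k by blast
      then have "\<sigma> k = j'" using uniq \<sigma>[OF k(1)] x j' by blast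
      then show "j' \<in> \<sigma> ` {1..n}" using k by blast
    qed
  qed
  have \<sigma>inj: "inj_on \<sigma> {1..n}"
    using eq_card_imp_inj_on[of "{1..n}" \<sigma>] \<sigma>surj by simp
  have comp: "\<And>k. k \<in> {1..n} \<Longrightarrow> inj_on ((r \<circ> u) \<circ> s) (P k)"
  proof -
    fix k assume k: "k \<in> {1..n}"
    have "inj_on g (P k)" using ginj[OF k] .
    moreover have "\<And>x. x \<in> P k \<Longrightarrow> g x = ((r \<circ> u) \<circ> s) x" using usr(4) sub[OF k] by auto
    ultimately show "inj_on ((r \<circ> u) \<circ> s) (P k)" using inj_on_cong by metis
  qed
  have sinj: "\<And>k. k \<in> {1..n} \<Longrightarrow> inj_on s (P k)"
    using comp inj_on_imageI2 by blast
  have uinj0: "\<And>k. k \<in> {1..n} \<Longrightarrow> inj_on u (s ` P k)"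
  proof -
    fix k assume k: "k \<in> {1..n}"
    have "inj_on (r \<circ> u) (s ` P k)" using comp[OF k] inj_on_imageI by blast
    then show "inj_on u (s ` P k)" using inj_on_imageI2 by blast
  qed
  have cle: "\<And>k. k \<in> {1..n} \<Longrightarrow> card (P k) \<le> card (P (\<sigma> k))"
  proof -
    fix k assume k: "k \<in> {1..n}"
    have "card (P k) = card (s ` P k)" using card_image[OF sinj[OF k]] by simp
    also have "\<dots> \<le> card (P (\<sigma> k))" using card_mono fin \<sigma>[OF k] by blast
    finally show "card (P k) \<le> card (P (\<sigma> k))" .
  qed
  have sumeq: "(\<Sum>k\<in>{1..n}. card (P (\<sigma> k))) = (\<Sum>k\<in>{1..n}. card (P k))"
    using sum.reindex[OF \<sigma>inj, of "\<lambda>k. card (P k)"] \<sigma>surj by (simp add: comp_def)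
  have ceq: "\<And>k. k \<in> {1..n} \<Longrightarrow> card (P k) = card (P (\<sigma> k))"
  proof (rule ccontr)
    fix k assume k: "k \<in> {1..n}" and ne': "card (P k) \<noteq> card (P (\<sigma> k))"
    then have "card (P k) < card (P (\<sigma> k))" using cle[OF k] by simp
    then have "(\<Sum>k\<in>{1..n}. card (P k)) < (\<Sum>k\<in>{1..n}. card (P (\<sigma> k)))"
      using sum_strict_mono_ex1[of "{1..n}" "\<lambda>k. card (P k)" "\<lambda>k. card (P (\<sigma> k))"] cle k by blast
    then show False using sumeq by simp
  qed
  have simg: "\<And>k. k \<in> {1..n} \<Longrightarrow> s ` P k = P (\<sigma> k)"
  proof -
    fix k assume k: "k \<in> {1..n}"
    show "s ` P k = P (\<sigma> k)"
      using card_subset_eq[OF fin[OF conjunct1[OF \<sigma>[OF k]]] conjunct2[OF \<sigma>[OF k]]]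
        card_image[OF sinj[OF k]] ceq[OF k] by simp
  qed
  have uinj: "\<forall>k\<in>{1..n}. inj_on u (P k)"
  proof
    fix k assume k: "k \<in> {1..n}"
    then obtain m where m: "m \<in> {1..n}" "k = \<sigma> m" using \<sigma>surj by blast
    show "inj_on u (P k)" using uinj0[OF m(1)] simg[OF m(1)] m by simp
  qed
  define \<tau> where "\<tau> = fbar P n u"
  have \<tau>: "\<And>k. k \<in> {1..n} \<Longrightarrow> \<tau> k \<in> {1..n} \<and> u ` P k \<subseteq> P (\<tau> k)"
    using fbar[OF uT] unfolding \<tau>_def by blast
  have key: "\<And>m m'. m \<in> {1..n} \<Longrightarrow> m' \<in> {1..n} \<Longrightarrow> m \<noteq> m' \<Longrightarrow>
      \<tau> (\<sigma> m) = \<tau> (\<sigma> m') \<Longrightarrow> {m, m'} = {a, b}"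
  proof -
    fix m m' assume h: "m \<in> {1..n}" "m' \<in> {1..n}" "m \<noteq> m'" "\<tau> (\<sigma> m) = \<tau> (\<sigma> m')"
    define c0 where "c0 = \<tau> (\<sigma> m)"
    have c0: "c0 \<in> {1..n}" using \<tau> \<sigma> h(1) unfolding c0_def by blast
    have rc: "fbar P n r c0 \<in> {1..n} \<and> r ` P c0 \<subseteq> P (fbar P n r c0)" using fbar[OF usr(3) c0] .
    have gm: "\<And>q. q \<in> {1..n} \<Longrightarrow> \<tau> (\<sigma> q) = c0 \<Longrightarrow> g ` P q \<subseteq> P (fbar P n r c0)"
    proof -
      fix q assume q: "q \<in> {1..n}" "\<tau> (\<sigma> q) = c0"
      have "g ` P q = (\<lambda>x. r (u (s x))) ` P q"
        proof (rule image_cong[OF refl])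
        fix x assume "x \<in> P q"
        then show "g x = r (u (s x))" using usr(4) sub[OF q(1)] by blast
      qed
      also have "\<dots> = r ` (u ` (s ` P q))" by (simp add: image_image)
      finally have "g ` P q = r ` (u ` (s ` P q))" .
      also have "\<dots> \<subseteq> r ` (u ` P (\<sigma> q))" using simg[OF q(1)] by simp
      also have "\<dots> \<subseteq> r ` P c0"
        using \<tau>[OF conjunct1[OF \<sigma>[OF q(1)]]] q(2) by (intro image_mono) simp
      also have "\<dots> \<subseteq> P (fbar P n r c0)" using rc by blast
      finally show "g ` P q \<subseteq> P (fbar P n r c0)" .
    qed
    have e2: "\<tau> (\<sigma> m') = c0" using h(4) unfolding c0_def by simp
    show "{m, m'} = {a, b}"
      by (rule gsep[OF h(1) h(2) conjunct1[OF rc] h(3) gm[OF h(1) c0_def[symmetric]] gm[OF h(2) e2]])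
  qed
  have upper: "card (\<tau> ` {1..n}) \<le> n - 1"
  proof -
    obtain j0 where j0: "j0 \<in> {1..n}" "u ` X \<inter> P j0 = {}"
      using usr(1) assms(6) uT unfolding SigmaP_def by blast
    have "\<tau> ` {1..n} \<subseteq> {1..n} - {j0}"
    proof
      fix y assume "y \<in> \<tau> ` {1..n}"
      then obtain k where k: "k \<in> {1..n}" "y = \<tau> k" by blast
      obtain z where z: "z \<in> P k" using ne[OF k(1)] by blast
      have "u z \<in> P y" using \<tau>[OF k(1)] z k by blast
      then have "y \<noteq> j0" using j0 z sub[OF k(1)] by blast
      then show "y \<in> {1..n} - {j0}" using \<tau> k by blast
    qed
    then have "card (\<tau> ` {1..n}) \<le> card ({1..n} - {j0})" by (simp add: card_mono)
    then show ?thesis using j0 by simp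
  qed
  have lower: "n - 1 \<le> card (\<tau> ` {1..n})"
  proof -
    have "inj_on (\<tau> \<circ> \<sigma>) ({1..n} - {b})"
      unfolding inj_on_def
    proof (intro ballI impI)
      fix m m' assume h: "m \<in> {1..n} - {b}" "m' \<in> {1..n} - {b}" "(\<tau> \<circ> \<sigma>) m = (\<tau> \<circ> \<sigma>) m'"
      show "m = m'"
      proof (rule ccontr)
        assume "m \<noteq> m'"
        then have "{m, m'} = {a, b}" using key h by auto
        then show False using h by (auto simp: doubleton_eq_iff)
      qed
    qed
    then have "card ((\<tau> \<circ> \<sigma>) ` ({1..n} - {b})) = n - 1" using card_image ab(2) by fastforce
    moreover have "(\<tau> \<circ> \<sigma>) ` ({1..n} - {b}) \<subseteq> \<tau> ` {1..n}" using \<sigma> by auto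
    ultimately show ?thesis by (metis card_mono finite_imageI finite_atLeastAtMost)
  qed
  have uA: "u \<in> AP X P n"
    unfolding AP_def using uT uinj upper lower \<tau>_def by auto
  have "\<not> inj_on \<tau> {1..n}"
  proof
    assume "inj_on \<tau> {1..n}"
    then have "card (\<tau> ` {1..n}) = n" using card_image by fastforce
    then show False using upper assms(4) by simp
  qed
  then obtain x y where xy: "x \<in> {1..n}" "y \<in> {1..n}" "x \<noteq> y" "\<tau> x = \<tau> y"
    unfolding inj_on_def by blast
  obtain m m' where mm: "m \<in> {1..n}" "m' \<in> {1..n}" "x = \<sigma> m" "y = \<sigma> m'"
    using xy \<sigma>surj by (metis imageE)
  then have "m \<noteq> m'" using xy by blast
  then have "{m, m'} = {i, j}" using key mm xy ab(5) by metis
  then have tij: "\<tau> (\<sigma> i) = \<tau> (\<sigma> j)" using xy mm by (auto simp: doubleton_eq_iff)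
  have "\<sigma> i \<noteq> \<sigma> j" using \<sigma>inj i j ij inj_on_def by metis
  then show "\<exists>f\<in>U \<inter> AP X P n. \<exists>k\<in>{1..n}. \<exists>l\<in>{1..n}. k \<noteq> l \<and>
              fbar P n f k = fbar P n f l \<and> card (P i) = card (P k) \<and> card (P j) = card (P l)"
    using usr(1) uA \<sigma> i j tij ceq unfolding \<tau>_def by blast
qed

end
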